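(* Let $X$ be a uniform space and let $f \colon X \to X$ be a uniformly continuous map. Let $Y$ be a subset of $X$ such that $Y$ and $f(Y)$ are both closed in $X$. Suppose that there is a net $(Z_i)_{i \in I}$ of subsets of $X$ such that $f(Z_i) \subset Z_i$ for all $i \in I$ and $(Z_i)$ converges to $Y$ in the Hausdorff-Bourbaki topology. Then $f(Y) \subset Y$.
   Context: For $V \subset X \times X$ and $A \subset X$, $V[A] = \{x \in X : (x,a) \in V \text{ for some } a \in A\}$. The Hausdorff-Bourbaki uniform structure on the set $\mathcal{P}(X)$ of all subsets of $X$ has as a base the sets $\widehat{V} = \{(A,B) : B \subset V[A] \text{ and } A \subset V[B]\}$, $V$ an entourage of $X$; the Hausdorff-Bourbaki topology is its associated topology. *)

theory Defs
  imports "HOL-Analysis.Analysis"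
begin

definition entourage :: "('a::uniform_space \<times> 'a) set \<Rightarrow> bool" where
  "entourage V \<longleftrightarrow> eventually (\<lambda>p. p \<in> V) uniformity"

definition ent_image :: "('a \<times> 'a) set \<Rightarrow> 'a set \<Rightarrow> 'a set" where
  "ent_image V A = {x. \<exists>a\<in>A. (x, a) \<in> V}"

definition hb_entourage :: "('a \<times> 'a) set \<Rightarrow> ('a set \<times> 'a set) set" where
  "hb_entourage V = {(A, B). B \<subseteq> ent_image V A \<and> A \<subseteq> ent_image V B}"

definition directed_set :: "'i set \<Rightarrow> ('i \<Rightarrow> 'i \<Rightarrow> bool) \<Rightarrow> bool" where
  "directed_set I le \<longleftrightarrow> I \<noteq> {} \<and> (\<forall>i\<in>I. le i i) \<and>
     (\<forall>i\<in>I. \<forall>j\<in>I. \<forall>k\<in>I. le i j \<longrightarrow> le j k \<longrightarrow> le i k) \<and>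
     (\<forall>i\<in>I. \<forall>j\<in>I. \<exists>k\<in>I. le i k \<and> le j k)"

definition hb_net_converges ::
  "'i set \<Rightarrow> ('i \<Rightarrow> 'i \<Rightarrow> bool) \<Rightarrow> ('i \<Rightarrow> 'a::uniform_space set) \<Rightarrow> 'a set \<Rightarrow> bool" where
  "hb_net_converges I le Z Y \<longleftrightarrow>
     (\<forall>V. entourage V \<longrightarrow>
        (\<exists>i0\<in>I. \<forall>i\<in>I. le i0 i \<longrightarrow> (Z i, Y) \<in> hb_entourage V))"

end

theory Submission
  imports Defs
begin

theorem corollary3p6:
  fixes f :: "'a::uniform_space \<Rightarrow> 'a"
    and Y :: "'a set"
    and I :: "'i set" and le :: "'i \<Rightarrow> 'i \<Rightarrow> bool"
    and Z :: "'i \<Rightarrow> 'a set"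
  assumes "uniformly_continuous_on UNIV f"
    and "closed Y" and "closed (f ` Y)"
    and "directed_set I le"
    and "\<forall>i\<in>I. f ` Z i \<subseteq> Z i"
    and "hb_net_converges I le Z Y"
  shows "f ` Y \<subseteq> Y"
proof
  fix w assume "w \<in> f ` Y"
  then obtain y where y: "y \<in> Y" "w = f y" by auto
  show "w \<in> Y"
  proof (rule ccontr)
    assume nw: "w \<notin> Y"
    have "open (- Y)" using assms(2) by auto
    hence ev: "eventually (\<lambda>(x', z). x' = w \<longrightarrow> z \<in> - Y) uniformity"
      using nw by (simp add: open_uniformity)
    obtain D where D: "eventually D uniformity"
      "\<And>x y z. D (x, y) \<Longrightarrow> D (y, z) \<Longrightarrow> (\<lambda>(x', z). x' = w \<longrightarrow> z \<in> - Y) (x, z)"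
      using uniformity_transE[OF ev] by blast
    have ev2: "eventually (\<lambda>(x, y). x \<in> UNIV \<longrightarrow> y \<in> UNIV \<longrightarrow> D (f x, f y)) uniformity"
      by (rule uniformly_continuous_onD[OF assms(1) D(1)])
    define V where "V = {p. D p \<and> (case p of (x, y) \<Rightarrow> D (f x, f y))}"
    have "entourage V" unfolding entourage_def V_def
      using eventually_conj[OF D(1) ev2] by (simp add: case_prod_beta)
    then obtain i0 where i0: "i0 \<in> I" "\<forall>i\<in>I. le i0 i \<longrightarrow> (Z i, Y) \<in> hb_entourage V"
      using assms(6) unfolding hb_net_converges_def by meson
    have "le i0 i0" using assms(4) i0(1) unfolding directed_set_def by meson
    hence i: "i0 \<in> I" "(Z i0, Y) \<in> hb_entourage V" using i0 by auto
    then obtain z where z: "z \<in> Z i0" "(y, z) \<in> V"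
      using y(1) unfolding hb_entourage_def ent_image_def by blast
    have "f z \<in> Z i0" using assms(5) i(1) z(1) by auto
    then obtain y' where y': "y' \<in> Y" "(f z, y') \<in> V"
      using i(2) unfolding hb_entourage_def ent_image_def by blast
    have "D (f y, f z)" using z(2) by (simp add: V_def)
    moreover have "D (f z, y')" using y'(2) by (simp add: V_def)
    ultimately have "y' \<in> - Y" using D(2)[of "f y" "f z" y'] y(2) by auto
    with y'(1) show False by auto
  qed
qed

end
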